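(* Let $(X,d)$ be a nonempty compact and rectifiably path-connected metric space and let $F:(X,d)\rightarrow (K(X),H)$ be a set-valued pointwise contraction. Then $F:(X,d_r)\rightarrow(K(X),H_r)$ is shrinking, i.e., $H_r(F(x),F(y))<d_r(x,y)$ for all $x,y\in X$ with $x\neq y$.
   Context: The length of a continuous path $p:[0,1]\to X$ is $l(p)=\sup\sum_{i=1}^n d(p(t_{i-1}),p(t_i))$ over finite partitions $0=t_0<\cdots<t_n=1$; $X$ is rectifiably path-connected if every two points are joined by a continuous path of finite length. $d_r(x,y)=\inf\{l(p):p$ a rectifiable path from $x$ to $y\}$. $K(X)$ is the set of nonempty compact subsets of $X$; $H$ and $H_r$ are the Hausdorff distances associated with $d$ and $d_r$ respectively, where for a metric $\rho$, $H_\rho(A,B)=\max\{\sup_{a\in A}\inf_{b\in B}\rho(a,b),\sup_{b\in B}\inf_{a\in A}\rho(a,b)\}$. $F$ is a set-valued pointwise contraction if for every $x\in X$ there exist $\beta_x\in[0,1)$ and an open neighborhood $N(x)$ with $H(F(x),F(y))\le\beta_x d(x,y)$ for all $y\in N(x)$. *)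

theory Defs
  imports "HOL-Analysis.Analysis"
begin

definition path_len :: "(real \<Rightarrow> 'a::metric_space) \<Rightarrow> ereal" where
  "path_len p = (SUP nt \<in> {(n, t). t 0 = (0::real) \<and> t n = 1 \<and> (\<forall>i<n. t i < t (Suc i))}.
      ereal (\<Sum>i<fst nt. dist (p (snd nt i)) (p (snd nt (Suc i)))))"

definition rect_path :: "'a::metric_space set \<Rightarrow> (real \<Rightarrow> 'a) \<Rightarrow> 'a \<Rightarrow> 'a \<Rightarrow> bool" where
  "rect_path X p x y \<longleftrightarrow> continuous_on {0..1} p \<and> p ` {0..1} \<subseteq> X \<and> p 0 = x \<and> p 1 = y
      \<and> path_len p < \<infinity>"

definition rect_path_connected :: "'a::metric_space set \<Rightarrow> bool" where
  "rect_path_connected X \<longleftrightarrow> (\<forall>x\<in>X. \<forall>y\<in>X. \<exists>p. rect_path X p x y)"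

definition d_r :: "'a::metric_space set \<Rightarrow> 'a \<Rightarrow> 'a \<Rightarrow> real" where
  "d_r X x y = Inf {real_of_ereal (path_len p) | p. rect_path X p x y}"

definition hdist :: "('a \<Rightarrow> 'a \<Rightarrow> real) \<Rightarrow> 'a set \<Rightarrow> 'a set \<Rightarrow> ereal" where
  "hdist \<rho> A B = max (SUP a\<in>A. ereal (INF b\<in>B. \<rho> a b)) (SUP b\<in>B. ereal (INF a\<in>A. \<rho> a b))"

definition maps_into_KX :: "'a::metric_space set \<Rightarrow> ('a \<Rightarrow> 'a set) \<Rightarrow> bool" where
  "maps_into_KX X F \<longleftrightarrow> (\<forall>x\<in>X. F x \<noteq> {} \<and> compact (F x) \<and> F x \<subseteq> X)"

definition setvalued_pointwise_contraction :: "'a::metric_space set \<Rightarrow> ('a \<Rightarrow> 'a set) \<Rightarrow> bool" where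
  "setvalued_pointwise_contraction X F \<longleftrightarrow>
     (\<forall>x\<in>X. \<exists>\<beta> N. 0 \<le> \<beta> \<and> \<beta> < 1 \<and> openin (top_of_set X) N \<and> x \<in> N \<and>
        (\<forall>y\<in>N. hdist dist (F x) (F y) \<le> ereal (\<beta> * dist x y)))"

end

theory Submission
  imports Defs
begin

lemma infdist_compact_attained:
  fixes B :: "'a::metric_space set"
  assumes "compact B" "B \<noteq> {}"
  shows "\<exists>b\<in>B. infdist a B = dist a b"
proof -
  have "continuous_on B (\<lambda>b. dist a b)" by (intro continuous_intros)
  then obtain b where b: "b \<in> B" "\<And>y. y \<in> B \<Longrightarrow> dist a b \<le> dist a y"
    using continuous_attains_inf[OF assms] by blast
  have "infdist a B = dist a b"
  proof (rule antisym)
    show "infdist a B \<le> dist a b" by (rule infdist_le[OF b(1)])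
    show "dist a b \<le> infdist a B" using assms(2) b unfolding infdist_def by (auto intro: cINF_greatest)
  qed
  with b show ?thesis by blast
qed

lemma part_mono:
  assumes "\<forall>i<n. (t::nat\<Rightarrow>real) i < t (Suc i)" "i \<le> j" "j \<le> n"
  shows "t i \<le> t j"
  using assms(2,3)
proof (induction j)
  case 0 then show ?case by simp
next
  case (Suc j)
  show ?case
  proof (cases "i = Suc j")
    case False
    then have "t i \<le> t j" using Suc by simp
    also have "t j < t (Suc j)" using assms(1) Suc by simp
    finally show ?thesis by simp
  qed simp
qed

lemma path_len_lip:
  fixes g :: "real \<Rightarrow> 'a::metric_space"
  assumes lip: "\<forall>s\<in>{0..1}. \<forall>t\<in>{0..1}. dist (g s) (g t) \<le> M * \<bar>s - t\<bar>" and M: "0 \<le> M"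
  shows "path_len g \<le> ereal M"
  unfolding path_len_def
proof (rule SUP_least, clarsimp)
  fix n and t :: "nat \<Rightarrow> real"
  assume t0: "t 0 = 0" and tn: "t n = 1" and inc: "\<forall>i<n. t i < t (Suc i)"
  have tin: "t i \<in> {0..1}" if "i \<le> n" for i
    using part_mono[OF inc, of 0 i] part_mono[OF inc, of i n] that t0 tn by auto
  have "(\<Sum>i<n. dist (g (t i)) (g (t (Suc i)))) \<le> (\<Sum>i<n. M * (t (Suc i) - t i))"
  proof (rule sum_mono)
    fix i assume "i \<in> {..<n}"
    then have "t i \<in> {0..1}" "t (Suc i) \<in> {0..1}" "t i < t (Suc i)" using tin inc by auto
    then show "dist (g (t i)) (g (t (Suc i))) \<le> M * (t (Suc i) - t i)"
      using lip by (metis abs_minus_commute abs_of_nonneg diff_ge_0_iff_ge less_eq_real_def)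
  qed
  also have "\<dots> = M * (t n - t 0)"
    by (simp add: sum_distrib_left[symmetric] sum_lessThan_telescope)
  finally show "(\<Sum>i<n. dist (g (t i)) (g (t (Suc i)))) \<le> M" using t0 tn by simp
qed

lemma path_len_ge_dist:
  fixes p :: "real \<Rightarrow> 'a::metric_space"
  shows "ereal (dist (p 0) (p 1)) \<le> path_len p"
proof -
  let ?t = "\<lambda>i::nat. if i = 0 then 0 else (1::real)"
  have "(1::nat, ?t) \<in> {(n, t). t 0 = (0::real) \<and> t n = 1 \<and> (\<forall>i<n. t i < t (Suc i))}"
    by auto
  then have "ereal (\<Sum>i<fst (1::nat, ?t). dist (p (snd (1::nat, ?t) i)) (p (snd (1::nat, ?t) (Suc i)))) \<le> path_len p"
    unfolding path_len_def by (rule SUP_upper)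
  then show ?thesis by simp
qed

lemma path_len_nonneg: "0 \<le> path_len p"
  by (rule order_trans[OF _ path_len_ge_dist]) simp

lemma rect_path_lip:
  fixes g :: "real \<Rightarrow> 'a::metric_space"
  assumes lip: "\<forall>s\<in>{0..1}. \<forall>t\<in>{0..1}. dist (g s) (g t) \<le> M * \<bar>s - t\<bar>" and M: "0 \<le> M"
    and X: "\<forall>t\<in>{0..1}. g t \<in> X" and "g 0 = a" "g 1 = b"
  shows "rect_path X g a b" "real_of_ereal (path_len g) \<le> M"
proof -
  have "M-lipschitz_on {0..1} g"
    using lip M by (auto simp: lipschitz_on_def dist_real_def)
  then have "continuous_on {0..1} g" by (rule lipschitz_on_continuous_on)
  moreover have pl: "path_len g \<le> ereal M" by (rule path_len_lip[OF lip M])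
  ultimately show "rect_path X g a b" using X assms(4,5) unfolding rect_path_def by auto
  show "real_of_ereal (path_len g) \<le> M"
    using pl path_len_nonneg[of g] by (cases "path_len g") auto
qed


lemma rect_path_len_fin: "rect_path X p x y \<Longrightarrow> ereal (real_of_ereal (path_len p)) = path_len p"
  using path_len_nonneg[of p] unfolding rect_path_def by (cases "path_len p") auto

lemma dr_set_ne:
  assumes "rect_path_connected X" "a \<in> X" "b \<in> X"
  shows "{real_of_ereal (path_len p) | p. rect_path X p a b} \<noteq> {}"
  using assms unfolding rect_path_connected_def by auto

lemma dr_set_bdd: "bdd_below {real_of_ereal (path_len p) | p. rect_path X p a b}"
  by (rule bdd_belowI[of _ 0]) (auto intro: real_of_ereal_pos path_len_nonneg)

lemma dr_nonneg:
  assumes "rect_path_connected X" "a \<in> X" "b \<in> X"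
  shows "0 \<le> d_r X a b"
  unfolding d_r_def using dr_set_ne[OF assms]
  by (intro cInf_greatest) (auto intro: real_of_ereal_pos path_len_nonneg)

lemma dr_le:
  assumes "rect_path X g a b"
  shows "d_r X a b \<le> real_of_ereal (path_len g)"
  unfolding d_r_def using assms by (intro cInf_lower dr_set_bdd) auto

lemma dr_approx:
  assumes "rect_path_connected X" "a \<in> X" "b \<in> X" "e > 0"
  shows "\<exists>p. rect_path X p a b \<and> real_of_ereal (path_len p) < d_r X a b + e"
proof -
  have "Inf {real_of_ereal (path_len p) | p. rect_path X p a b} < d_r X a b + e"
    using assms(4) unfolding d_r_def by simp
  from cInf_lessD[OF dr_set_ne[OF assms(1-3)] this] show ?thesis by auto
qed

lemma dr_ge_dist:
  assumes "rect_path_connected X" "a \<in> X" "b \<in> X"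
  shows "dist a b \<le> d_r X a b"
  unfolding d_r_def
proof (rule cInf_greatest[OF dr_set_ne[OF assms]], clarsimp)
  fix p assume p: "rect_path X p a b"
  have "ereal (dist (p 0) (p 1)) \<le> path_len p" by (rule path_len_ge_dist)
  also have "\<dots> = ereal (real_of_ereal (path_len p))" using rect_path_len_fin[OF p] by simp
  finally show "dist a b \<le> real_of_ereal (path_len p)" using p unfolding rect_path_def by simp
qed

lemma chain_from_path:
  fixes p :: "real \<Rightarrow> 'a::metric_space"
  assumes p: "rect_path X p x y" and e: "e > 0"
  shows "\<exists>n z. z 0 = x \<and> z n = y \<and> (\<forall>i\<le>n. z i \<in> X) \<and> (\<forall>i<n. dist (z i) (z (Suc i)) \<le> e)
     \<and> (\<Sum>i<n. dist (z i) (z (Suc i))) \<le> real_of_ereal (path_len p)"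
proof -
  have cont: "continuous_on {0..1} p" and img: "p ` {0..1} \<subseteq> X" and p0: "p 0 = x" and p1: "p 1 = y"
    using p unfolding rect_path_def by auto
  have "uniformly_continuous_on {0..1} p"
    by (rule compact_uniformly_continuous[OF cont]) simp
  then obtain d where d: "d > 0" "\<And>s t. s \<in> {0..1} \<Longrightarrow> t \<in> {0..1} \<Longrightarrow> dist t s < d \<Longrightarrow> dist (p t) (p s) < e"
    unfolding uniformly_continuous_on_def using e by metis
  obtain N :: nat where N: "1 / d < N" using reals_Archimedean2 by blast
  have Npos: "N > 0" using N d by (metis divide_pos_pos gr0I less_numeral_extra(1) of_nat_0 order.asym)
  have Nd: "1 / real N < d" using N d Npos by (simp add: field_simps)
  define t where "t i = real i / real N" for i
  define z where "z i = p (t i)" for i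
  have tin: "t i \<in> {0..1}" if "i \<le> N" for i using that Npos by (auto simp: t_def field_simps)
  have "(N, t) \<in> {(n, t). t 0 = (0::real) \<and> t n = 1 \<and> (\<forall>i<n. t i < t (Suc i))}"
  proof -
    have "t i < t (Suc i)" for i unfolding t_def using Npos by (intro divide_strict_right_mono) auto
    moreover have "t 0 = 0" "t N = 1" using Npos by (auto simp: t_def)
    ultimately show ?thesis by auto
  qed
  then have "ereal (\<Sum>i<fst (N, t). dist (p (snd (N, t) i)) (p (snd (N, t) (Suc i)))) \<le> path_len p"
    unfolding path_len_def by (rule SUP_upper)
  then have "ereal (\<Sum>i<N. dist (p (t i)) (p (t (Suc i)))) \<le> path_len p" by simp
  also have "\<dots> = ereal (real_of_ereal (path_len p))" using rect_path_len_fin[OF p] by simp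
  finally have sum: "(\<Sum>i<N. dist (z i) (z (Suc i))) \<le> real_of_ereal (path_len p)"
    by (simp add: z_def)
  have step: "dist (z i) (z (Suc i)) \<le> e" if "i < N" for i
  proof -
    have "dist (t i) (t (Suc i)) = 1 / real N" using Npos by (simp add: t_def dist_real_def field_simps)
    then have "dist (t i) (t (Suc i)) < d" using Nd by simp
    then show ?thesis unfolding z_def using d(2)[of "t (Suc i)" "t i"] tin that by (simp add: dist_commute)
  qed
  have "z 0 = x" "z N = y" using p0 p1 Npos by (auto simp: z_def t_def)
  moreover have "\<forall>i\<le>N. z i \<in> X" using img tin by (auto simp: z_def)
  ultimately show ?thesis using step sum by blast
qed


lemma chain_dist_le:
  fixes z :: "nat \<Rightarrow> 'a::metric_space"
  assumes "i \<le> j"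
  shows "dist (z i) (z j) \<le> (\<Sum>k<j. dist (z k) (z (Suc k))) - (\<Sum>k<i. dist (z k) (z (Suc k)))"
  using assms
proof (induction j)
  case 0 then show ?case by simp
next
  case (Suc j)
  show ?case
  proof (cases "i = Suc j")
    case False
    then have "i \<le> j" using Suc by simp
    then have "dist (z i) (z j) \<le> (\<Sum>k<j. dist (z k) (z (Suc k))) - (\<Sum>k<i. dist (z k) (z (Suc k)))"
      using Suc by simp
    moreover have "dist (z i) (z (Suc j)) \<le> dist (z i) (z j) + dist (z j) (z (Suc j))"
      by (rule dist_triangle)
    ultimately show ?thesis by simp
  qed simp
qed

lemma chain_sum_mono:
  fixes z :: "nat \<Rightarrow> 'a::metric_space"
  assumes "i \<le> j"
  shows "(\<Sum>k<i. dist (z k) (z (Suc k))) \<le> (\<Sum>k<j. dist (z k) (z (Suc k)))"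
  using assms by (intro sum_mono2) auto

lemma chain_param:
  fixes z :: "nat \<Rightarrow> 'a::metric_space"
  assumes z0: "z 0 = a" and zn: "z n \<in> K" and zX: "\<forall>i\<le>n. z i \<in> X"
    and st: "\<forall>i<n. dist (z i) (z (Suc i)) \<le> e"
    and sm: "(\<Sum>i<n. dist (z i) (z (Suc i))) \<le> M + e" and e: "e > 0" and M: "0 \<le> M"
  shows "\<exists>g. g 0 = a \<and> g 1 \<in> K \<and> (\<forall>t. g t \<in> X) \<and>
           (\<forall>s\<in>{0..1}. \<forall>t\<in>{0..1}. dist (g s) (g t) \<le> M * \<bar>s - t\<bar> + 2 * e)"
proof -
  define c where "c j = (\<Sum>k<j. dist (z k) (z (Suc k)))" for j
  define L where "L = M + e"
  have Lpos: "L > 0" using e M by (simp add: L_def)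
  define Sx where "Sx t = insert 0 {j. j \<le> n \<and> c j \<le> t * L}" for t
  define J where "J t = Max (Sx t)" for t
  define g where "g t = z (J t)" for t
  have finS: "finite (Sx t)" for t unfolding Sx_def by auto
  have JS: "J t \<in> Sx t" for t unfolding J_def using finS by (intro Max_in) (auto simp: Sx_def)
  have Jn: "J t \<le> n" for t using JS[of t] by (auto simp: Sx_def)
  have Jmax: "j \<in> Sx t \<Longrightarrow> j \<le> J t" for j t unfolding J_def using finS by simp
  have c0: "c 0 = 0" by (simp add: c_def)
  have cmono: "i \<le> j \<Longrightarrow> c i \<le> c j" for i j unfolding c_def by (rule chain_sum_mono)
  have cdist: "i \<le> j \<Longrightarrow> dist (z i) (z j) \<le> c j - c i" for i j unfolding c_def by (rule chain_dist_le)
  have cJ: "c (J t) \<le> t * L" if "t \<ge> 0" for t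
    using JS[of t] that Lpos c0 by (auto simp: Sx_def)
  have cJ2: "c (Suc (J t)) > t * L" if "J t < n" for t
  proof (rule ccontr)
    assume "\<not> ?thesis"
    then have "Suc (J t) \<in> Sx t" using that by (auto simp: Sx_def)
    then show False using Jmax by fastforce
  qed
  have Jmono: "s \<le> t \<Longrightarrow> J s \<le> J t" for s t
  proof -
    assume "s \<le> t"
    then have "Sx s \<subseteq> Sx t" unfolding Sx_def using Lpos
      by (auto intro: order_trans mult_right_mono)
    then show ?thesis unfolding J_def using finS by (intro Max_mono) (auto simp: Sx_def)
  qed
  have "n \<in> Sx 1" using sm by (auto simp: Sx_def c_def L_def)
  then have "J 1 = n" using Jmax Jn by (meson antisym)
  then have g1: "g 1 \<in> K" using zn by (simp add: g_def)
  have "dist (z 0) (z (J 0)) \<le> c (J 0) - c 0" by (rule cdist) simp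
  then have "dist (z 0) (z (J 0)) \<le> 0" using cJ[of 0] c0 by linarith
  then have g0: "g 0 = a" using z0 by (simp add: g_def)
  have gX: "\<forall>t. g t \<in> X" using zX Jn by (simp add: g_def)
  have lip1: "dist (g s) (g t) \<le> M * (t - s) + 2 * e" if "0 \<le> s" "s \<le> t" "t \<le> 1" for s t
  proof -
    have d1: "dist (g s) (g t) \<le> c (J t) - c (J s)" unfolding g_def using Jmono[OF that(2)] by (rule cdist)
    show ?thesis
    proof (cases "J s < n")
      case True
      have "c (Suc (J s)) = c (J s) + dist (z (J s)) (z (Suc (J s)))" by (simp add: c_def)
      also have "\<dots> \<le> c (J s) + e" using st True by simp
      finally have "s * L < c (J s) + e" using cJ2[OF True] by simp
      moreover have "c (J t) \<le> t * L" using cJ that by simp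
      ultimately have "dist (g s) (g t) \<le> (t - s) * L + e" using d1 by (simp add: algebra_simps)
      also have "\<dots> = M * (t - s) + e * (t - s) + e" by (simp add: L_def algebra_simps)
      also have "\<dots> \<le> M * (t - s) + 2 * e" using that e by (simp add: mult_left_le)
      finally show ?thesis .
    next
      case False
      then have "J s = n" "J t = n" using Jn Jmono[OF that(2)] by (auto simp: le_antisym)
      then have "dist (g s) (g t) = 0" by (simp add: g_def)
      then show ?thesis using that e M by simp
    qed
  qed
  have "\<forall>s\<in>{0..1}. \<forall>t\<in>{0..1}. dist (g s) (g t) \<le> M * \<bar>s - t\<bar> + 2 * e"
  proof (intro ballI)
    fix s t :: real assume "s \<in> {0..1}" "t \<in> {0..1}"
    then show "dist (g s) (g t) \<le> M * \<bar>s - t\<bar> + 2 * e"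
      using lip1[of s t] lip1[of t s] by (cases "s \<le> t") (auto simp: dist_commute abs_if)
  qed
  then show ?thesis using g0 g1 gX by (intro exI[of _ g]) simp
qed

lemma chains_to_path:
  fixes X :: "'a::metric_space set"
  assumes X: "compact X" and K: "closed K" and M: "0 \<le> M"
    and ch: "\<forall>e>0. \<exists>n z. z 0 = a \<and> z n \<in> K \<and> (\<forall>i\<le>n. z i \<in> X) \<and> (\<forall>i<n. dist (z i) (z (Suc i)) \<le> e)
              \<and> (\<Sum>i<n. dist (z i) (z (Suc i))) \<le> M + e"
  shows "\<exists>g. g 0 = a \<and> g 1 \<in> K \<and> (\<forall>t\<in>{0..1}. g t \<in> X) \<and>
           (\<forall>s\<in>{0..1}. \<forall>t\<in>{0..1}. dist (g s) (g t) \<le> M * \<bar>s - t\<bar>)"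
proof -
  define S :: "(real \<Rightarrow> 'a) set" where "S = {g. \<forall>t. g t \<in> X}"
  have "compactin (product_topology (\<lambda>i. euclidean) UNIV) (PiE UNIV (\<lambda>_::real. X))"
    using X by (simp add: compactin_PiE)
  moreover have "PiE UNIV (\<lambda>_::real. X) = S" by (auto simp: S_def PiE_def extensional_def)
  ultimately have cS: "compact S" by (simp add: euclidean_product_topology)
  define A where "A d = {g::real\<Rightarrow>'a. g 0 = a} \<inter> {g. g 1 \<in> K} \<inter>
      (\<Inter>s\<in>{0..1}. \<Inter>t\<in>{0..1}. {g. dist (g s) (g t) \<le> M * \<bar>s - t\<bar> + d})" for d
  have clA: "closed (A d)" for d
  proof -
    have c1: "closed {g::real\<Rightarrow>'a. g 0 = a}"
      by (rule closed_Collect_eq) (auto intro: continuous_on_const)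
    have c2: "closed {g::real\<Rightarrow>'a. g 1 \<in> K}"
      using closed_vimage[OF K continuous_on_product_coordinates[of 1]] by (simp add: vimage_def)
    have c3: "closed {g::real\<Rightarrow>'a. dist (g s) (g t) \<le> M * \<bar>s - t\<bar> + d}" for s t
      by (rule closed_Collect_le) (rule continuous_on_dist[OF continuous_on_product_coordinates continuous_on_product_coordinates], rule continuous_on_const)
    show ?thesis unfolding A_def using c1 c2 c3 by (intro closed_Int closed_INT) auto
  qed
  have Amono: "A d \<subseteq> A d'" if dd: "d \<le> d'" for d d'
  proof (auto simp: A_def)
    fix g :: "real \<Rightarrow> 'a" and s t :: real
    assume H: "\<forall>x\<in>{0..1}. \<forall>y\<in>{0..1}. dist (g x) (g y) \<le> M * \<bar>x - y\<bar> + d"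
      and "0 \<le> s" "s \<le> 1" "0 \<le> t" "t \<le> 1"
    then have "dist (g s) (g t) \<le> M * \<bar>s - t\<bar> + d" by auto
    then show "dist (g s) (g t) \<le> M * \<bar>s - t\<bar> + d'" using dd by linarith
  qed
  have Ane: "S \<inter> A d \<noteq> {}" if dpos: "d > 0" for d
  proof -
    have d2: "d/2 > 0" using dpos by simp
    obtain n z where "z 0 = a" "z n \<in> K" "\<forall>i\<le>n. z i \<in> X" "\<forall>i<n. dist (z i) (z (Suc i)) \<le> d/2"
      "(\<Sum>i<n. dist (z i) (z (Suc i))) \<le> M + d/2"
      using ch d2 by blast
    from chain_param[OF this d2 M] obtain g where
      "g 0 = a" "g 1 \<in> K" "\<forall>t. g t \<in> X" "\<forall>s\<in>{0..1}. \<forall>t\<in>{0..1}. dist (g s) (g t) \<le> M * \<bar>s - t\<bar> + 2 * (d/2)"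
      by blast
    then have "g \<in> S \<inter> A d" by (auto simp: S_def A_def)
    then show ?thesis by blast
  qed
  have "S \<inter> \<Inter>(A ` {0<..}) \<noteq> {}"
  proof (rule compact_fip[THEN iffD1, OF cS, rule_format])
    show "\<And>a. a \<in> A ` {0<..} \<Longrightarrow> closed a" using clA by auto
    fix B assume B: "B \<subseteq> A ` {0<..}" "finite B"
    then obtain D where D: "D \<subseteq> {0<..}" "finite D" "B = A ` D" using finite_subset_image by metis
    define d0 where "d0 = (if D = {} then 1 else Min D)"
    have d0: "d0 > 0" using D by (auto simp: d0_def)
    have "A d0 \<subseteq> A d" if "d \<in> D" for d
    proof -
      have "d0 \<le> d" using that D by (auto simp: d0_def)
      then show ?thesis by (rule Amono)
    qed
    then have "A d0 \<subseteq> \<Inter>B" using D by auto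
    then show "S \<inter> \<Inter>B \<noteq> {}" using Ane[OF d0] by blast
  qed
  then obtain g where g: "g \<in> S" "\<And>d. d > 0 \<Longrightarrow> g \<in> A d" by blast
  have "g 0 = a" "g 1 \<in> K" using g(2)[of 1] by (auto simp: A_def)
  moreover have "\<forall>t\<in>{0..1}. g t \<in> X" using g(1) by (auto simp: S_def)
  moreover have "\<forall>s\<in>{0..1}. \<forall>t\<in>{0..1}. dist (g s) (g t) \<le> M * \<bar>s - t\<bar>"
  proof (intro ballI, rule field_le_epsilon)
    fix s t :: real and d :: real assume "s \<in> {0..1}" "t \<in> {0..1}" "0 < d"
    then show "dist (g s) (g t) \<le> M * \<bar>s - t\<bar> + d" using g(2)[of d] by (auto simp: A_def)
  qed
  ultimately show ?thesis by blast
qed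


definition Eh :: "'a::metric_space set \<Rightarrow> 'a set \<Rightarrow> real \<Rightarrow> bool" where
  "Eh A B g \<longleftrightarrow> (\<forall>a\<in>A. infdist a B \<le> g)"

lemma Eh_mono: "Eh A B g \<Longrightarrow> g \<le> g' \<Longrightarrow> Eh A B g'"
  unfolding Eh_def by force

lemma hdist_Eh:
  fixes A B :: "'a::metric_space set"
  assumes "hdist dist A B \<le> ereal g" "A \<noteq> {}" "B \<noteq> {}"
  shows "Eh A B g" "Eh B A g"
proof -
  show "Eh A B g" unfolding Eh_def
  proof
    fix a assume a: "a \<in> A"
    have "ereal (INF b\<in>B. dist a b) \<le> (SUP a\<in>A. ereal (INF b\<in>B. dist a b))"
      using a by (rule SUP_upper)
    also have "\<dots> \<le> hdist dist A B" unfolding hdist_def by simp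
    also have "\<dots> \<le> ereal g" by (rule assms(1))
    finally have "(INF b\<in>B. dist a b) \<le> g" by simp
    then show "infdist a B \<le> g" using assms(3) by (simp add: infdist_def)
  qed
  show "Eh B A g" unfolding Eh_def
  proof
    fix b assume b: "b \<in> B"
    have "ereal (INF a\<in>A. dist a b) \<le> (SUP b\<in>B. ereal (INF a\<in>A. dist a b))"
      using b by (rule SUP_upper)
    also have "\<dots> \<le> hdist dist A B" unfolding hdist_def by simp
    also have "\<dots> \<le> ereal g" by (rule assms(1))
    finally have "(INF a\<in>A. dist a b) \<le> g" by simp
    then show "infdist b A \<le> g" using assms(2) by (simp add: infdist_def dist_commute)
  qed
qed

definition Ch :: "'a::metric_space set \<Rightarrow> ('a \<Rightarrow> 'a set) \<Rightarrow> (real \<Rightarrow> 'a) \<Rightarrow> 'a \<Rightarrow> real \<Rightarrow> real \<Rightarrow> real \<Rightarrow> bool" where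
  "Ch X F q a e t l \<longleftrightarrow> (\<exists>n z. z 0 = a \<and> z n \<in> F (q t) \<and> (\<forall>i\<le>n. z i \<in> X) \<and>
      (\<forall>i<n. dist (z i) (z (Suc i)) \<le> e) \<and> (\<Sum>i<n. dist (z i) (z (Suc i))) \<le> l)"

lemma Ch_mono:
  assumes "Ch X F q a e t l" "l \<le> l'"
  shows "Ch X F q a e t l'"
proof -
  obtain n z where z: "z 0 = a" "z n \<in> F (q t)" "\<forall>i\<le>n. z i \<in> X"
      "\<forall>i<n. dist (z i) (z (Suc i)) \<le> e" "(\<Sum>i<n. dist (z i) (z (Suc i))) \<le> l"
    using assms(1) unfolding Ch_def by blast
  then have "(\<Sum>i<n. dist (z i) (z (Suc i))) \<le> l'" using assms(2) by linarith
  with z show ?thesis unfolding Ch_def by blast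
qed

lemma Ch_ext:
  assumes ch: "Ch X F q a e s l" and E: "Eh (F (q s)) (F (q t)) g" and ge: "g \<le> e"
    and K: "compact (F (q t))" "F (q t) \<noteq> {}" "F (q t) \<subseteq> X"
  shows "Ch X F q a e t (l + g)"
proof -
  obtain n z where z: "z 0 = a" "z n \<in> F (q s)" "\<forall>i\<le>n. z i \<in> X"
      "\<forall>i<n. dist (z i) (z (Suc i)) \<le> e" "(\<Sum>i<n. dist (z i) (z (Suc i))) \<le> l"
    using ch unfolding Ch_def by blast
  obtain b where b: "b \<in> F (q t)" "infdist (z n) (F (q t)) = dist (z n) b"
    using infdist_compact_attained[OF K(1,2)] by blast
  have db: "dist (z n) b \<le> g" using E z(2) b(2) unfolding Eh_def by metis
  define z' where "z' = z(Suc n := b)"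
  have "z' 0 = a" using z by (simp add: z'_def)
  moreover have "z' (Suc n) \<in> F (q t)" using b by (simp add: z'_def)
  moreover have "\<forall>i\<le>Suc n. z' i \<in> X" using z(3) b K(3) by (auto simp: z'_def le_Suc_eq)
  moreover have "\<forall>i<Suc n. dist (z' i) (z' (Suc i)) \<le> e"
    using z(4) db ge by (auto simp: z'_def less_Suc_eq)
  moreover have "(\<Sum>i<Suc n. dist (z' i) (z' (Suc i))) \<le> l + g"
  proof -
    have "(\<Sum>i<n. dist (z' i) (z' (Suc i))) = (\<Sum>i<n. dist (z i) (z (Suc i)))"
      by (rule sum.cong) (auto simp: z'_def)
    then show ?thesis using z(5) db by (simp add: z'_def)
  qed
  ultimately show ?thesis unfolding Ch_def by blast
qed

lemma Ch_start: "a \<in> F (q t) \<Longrightarrow> F (q t) \<subseteq> X \<Longrightarrow> Ch X F q a e t 0"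
  unfolding Ch_def by (rule exI[of _ 0], rule exI[of _ "\<lambda>_. a"]) auto

locale setting =
  fixes X :: "'a::metric_space set" and F :: "'a \<Rightarrow> 'a set" and q :: "real \<Rightarrow> 'a" and L :: real
  assumes cX: "compact X"
    and KX: "\<forall>x\<in>X. F x \<noteq> {} \<and> compact (F x) \<and> F x \<subseteq> X"
    and qX: "\<forall>t\<in>{0..1}. q t \<in> X"
    and qlip: "\<forall>s\<in>{0..1}. \<forall>t\<in>{0..1}. dist (q s) (q t) \<le> L * \<bar>s - t\<bar>"
    and Lpos: "L > 0"
    and loc: "\<forall>u\<in>{0..1}. \<exists>\<beta> r. 0 \<le> \<beta> \<and> \<beta> < 1 \<and> r > 0 \<and> (\<forall>s\<in>{0..1}. \<bar>s - u\<bar> < r \<longrightarrow>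
         Eh (F (q u)) (F (q s)) (\<beta> * dist (q u) (q s)) \<and> Eh (F (q s)) (F (q u)) (\<beta> * dist (q u) (q s)))"
begin

lemma Fq: "t \<in> {0..1} \<Longrightarrow> compact (F (q t)) \<and> F (q t) \<noteq> {} \<and> F (q t) \<subseteq> X"
  using KX qX by blast

lemma RI:
  assumes e: "e > 0" and s: "0 \<le> s0" "s0 \<le> s1" "s1 \<le> 1" and ch: "Ch X F q a e s0 l"
  shows "Ch X F q a e s1 (l + L * (s1 - s0))"
proof -
  define S where "S = {t. s0 \<le> t \<and> t \<le> s1 \<and> Ch X F q a e t (l + L * (t - s0))}"
  have s0S: "s0 \<in> S" using s ch by (simp add: S_def)
  have bdd: "bdd_above S" by (rule bdd_aboveI[of _ s1]) (auto simp: S_def)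
  define \<sigma> where "\<sigma> = Sup S"
  have sig1: "s0 \<le> \<sigma>" unfolding \<sigma>_def using s0S bdd by (rule cSup_upper)
  have sig2: "\<sigma> \<le> s1" unfolding \<sigma>_def using s0S by (intro cSup_least) (auto simp: S_def)
  have sig01: "\<sigma> \<in> {0..1}" using sig1 sig2 s by auto
  obtain \<beta> r where br: "0 \<le> \<beta>" "\<beta> < 1" "r > 0"
    "\<And>t. t \<in> {0..1} \<Longrightarrow> \<bar>t - \<sigma>\<bar> < r \<Longrightarrow>
         Eh (F (q \<sigma>)) (F (q t)) (\<beta> * dist (q \<sigma>) (q t)) \<and> Eh (F (q t)) (F (q \<sigma>)) (\<beta> * dist (q \<sigma>) (q t))"
    using loc sig01 by blast
  define \<rho> where "\<rho> = min r (e / L)"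
  have rho: "\<rho> > 0" "\<rho> \<le> r" "L * \<rho> \<le> e" using br e Lpos by (auto simp: \<rho>_def field_simps min_def)
  have gbound: "\<beta> * dist (q \<sigma>) (q t) \<le> L * \<bar>t - \<sigma>\<bar>" if "t \<in> {0..1}" for t
  proof -
    have "\<beta> * dist (q \<sigma>) (q t) \<le> 1 * dist (q \<sigma>) (q t)"
      using br by (intro mult_right_mono) auto
    also have "\<dots> \<le> L * \<bar>\<sigma> - t\<bar>" using qlip sig01 that by simp
    finally show ?thesis by (simp add: abs_minus_commute)
  qed
  have "\<sigma> - \<rho> < \<sigma>" using rho by simp
  then obtain t where t: "t \<in> S" "\<sigma> - \<rho> < t"
    unfolding \<sigma>_def using less_cSup_iff[of S] s0S bdd by blast
  have tle: "t \<le> \<sigma>" unfolding \<sigma>_def using t(1) bdd by (rule cSup_upper)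
  have t01: "t \<in> {0..1}" using t(1) s by (auto simp: S_def)
  have cht: "Ch X F q a e t (l + L * (t - s0))" using t(1) by (simp add: S_def)
  have Et: "Eh (F (q t)) (F (q \<sigma>)) (\<beta> * dist (q \<sigma>) (q t))"
    using br(4)[OF t01] t tle rho by auto
  have g1: "\<beta> * dist (q \<sigma>) (q t) \<le> L * (\<sigma> - t)" using gbound[OF t01] tle by simp
  have "L * (\<sigma> - t) \<le> L * \<rho>" using t(2) Lpos by simp
  then have g2: "\<beta> * dist (q \<sigma>) (q t) \<le> e" using g1 rho by linarith
  have "Ch X F q a e \<sigma> (l + L * (t - s0) + \<beta> * dist (q \<sigma>) (q t))"
    using Ch_ext[OF cht Et g2] Fq[OF sig01] by blast
  then have chs: "Ch X F q a e \<sigma> (l + L * (\<sigma> - s0))"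
    by (rule Ch_mono) (use g1 in \<open>simp add: algebra_simps\<close>)
  have "\<sigma> = s1"
  proof (rule ccontr)
    assume "\<sigma> \<noteq> s1"
    then have lt: "\<sigma> < s1" using sig2 by simp
    define t' where "t' = min s1 (\<sigma> + \<rho> / 2)"
    have t'01: "t' \<in> {0..1}" using lt sig1 s rho by (auto simp: t'_def min_def)
    have t'gt: "t' > \<sigma>" using lt rho by (simp add: t'_def)
    have t'd: "t' - \<sigma> \<le> \<rho> / 2" by (auto simp: t'_def min_def)
    have Et': "Eh (F (q \<sigma>)) (F (q t')) (\<beta> * dist (q \<sigma>) (q t'))"
      using br(4)[OF t'01] t'gt t'd rho by auto
    have g1': "\<beta> * dist (q \<sigma>) (q t') \<le> L * (t' - \<sigma>)" using gbound[OF t'01] t'gt by simp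
    have "L * (t' - \<sigma>) \<le> L * \<rho>" using t'd rho Lpos by simp
    then have g2': "\<beta> * dist (q \<sigma>) (q t') \<le> e" using g1' rho by linarith
    have "Ch X F q a e t' (l + L * (\<sigma> - s0) + \<beta> * dist (q \<sigma>) (q t'))"
      using Ch_ext[OF chs Et' g2'] Fq[OF t'01] by blast
    then have "Ch X F q a e t' (l + L * (t' - s0))"
      by (rule Ch_mono) (use g1' in \<open>simp add: algebra_simps\<close>)
    then have "t' \<in> S" using sig1 t'gt by (auto simp: S_def t'_def)
    then have "t' \<le> \<sigma>" unfolding \<sigma>_def using bdd by (rule cSup_upper)
    then show False using t'gt by simp
  qed
  then show ?thesis using chs by simp
qed

end


definition Bset :: "('a::metric_space \<Rightarrow> 'a set) \<Rightarrow> (real \<Rightarrow> 'a) \<Rightarrow> nat \<Rightarrow> nat \<Rightarrow> real set" where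
  "Bset F q k m = {u\<in>{0..1}. \<forall>s\<in>{0..1}. \<bar>s - u\<bar> < 1 / real (Suc m) \<longrightarrow>
      Eh (F (q u)) (F (q s)) ((1 - 1 / real (Suc k)) * dist (q u) (q s))}"

context setting begin

lemma UI:
  assumes e: "e > 0" and al: "0 \<le> \<alpha>" and tau: "\<tau> > 0" "\<alpha> + \<tau> \<le> 1"
    and b0: "0 \<le> \<beta>0" "\<beta>0 \<le> 1" and r0: "r0 > 0"
    and H: "\<forall>u\<in>{\<alpha>..\<alpha>+\<tau>}. \<forall>s\<in>{0..1}. \<bar>s - u\<bar> < r0 \<longrightarrow> Eh (F (q u)) (F (q s)) (\<beta>0 * dist (q u) (q s))"
    and ch: "Ch X F q a e \<alpha> l"
  shows "Ch X F q a e (\<alpha> + \<tau>) (l + \<beta>0 * L * \<tau>)"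
proof -
  define \<rho> where "\<rho> = min r0 (e / L)"
  have rho: "\<rho> > 0" "\<rho> \<le> r0" "L * \<rho> \<le> e" using r0 e Lpos by (auto simp: \<rho>_def field_simps min_def)
  obtain N :: nat where N: "\<tau> / \<rho> < N" using reals_Archimedean2 by blast
  have Npos: "N > 0" using N tau rho by (metis divide_pos_pos gr0I of_nat_0 order.asym)
  define h where "h = \<tau> / N"
  have hpos: "h > 0" using tau Npos by (simp add: h_def)
  have hrho: "h < \<rho>" using N rho Npos by (simp add: h_def field_simps)
  have Nh: "real N * h = \<tau>" using Npos by (simp add: h_def)
  have "Ch X F q a e (\<alpha> + real j * h) (l + \<beta>0 * L * (real j * h))" if "j \<le> N" for j
    using that
  proof (induction j)
    case 0 then show ?case using ch by simp
  next
    case (Suc j)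
    then have IH: "Ch X F q a e (\<alpha> + real j * h) (l + \<beta>0 * L * (real j * h))" by simp
    define u where "u = \<alpha> + real j * h"
    have jh: "real j * h \<le> \<tau> - h" using Suc.prems Nh hpos
      by (metis Suc_le_eq diff_ge_0_iff_ge le_diff_eq less_imp_of_nat_less mult_right_mono of_nat_Suc
          distrib_right mult_1 less_imp_le of_nat_le_iff add.commute)
    have uI: "u \<in> {\<alpha>..\<alpha>+\<tau>}" using jh hpos al by (auto simp: u_def)
    have u01: "u \<in> {0..1}" "u + h \<in> {0..1}" using jh hpos al tau by (auto simp: u_def)
    have E: "Eh (F (q u)) (F (q (u + h))) (\<beta>0 * dist (q u) (q (u + h)))"
      using H uI u01 hrho rho hpos by auto
    have "dist (q u) (q (u + h)) \<le> L * \<bar>u - (u + h)\<bar>" using qlip u01 by blast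
    then have "dist (q u) (q (u + h)) \<le> L * h" using hpos by simp
    then have g1: "\<beta>0 * dist (q u) (q (u + h)) \<le> \<beta>0 * (L * h)"
      using b0 by (intro mult_left_mono) auto
    have "\<beta>0 * (L * h) \<le> 1 * (L * h)" using b0 Lpos hpos by (intro mult_right_mono) auto
    also have "\<dots> \<le> L * \<rho>" using hrho Lpos by simp
    finally have g2: "\<beta>0 * dist (q u) (q (u + h)) \<le> e" using g1 rho by linarith
    have "Ch X F q a e (u + h) (l + \<beta>0 * L * (real j * h) + \<beta>0 * dist (q u) (q (u + h)))"
      using Ch_ext[OF IH[folded u_def] E g2] Fq[OF u01(2)] by blast
    then have "Ch X F q a e (u + h) (l + \<beta>0 * L * (real (Suc j) * h))"
      by (rule Ch_mono) (use g1 in \<open>simp add: algebra_simps\<close>)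
    then show ?case by (simp add: u_def algebra_simps)
  qed
  from this[of N] show ?thesis using Nh by simp
qed

lemma B_closed: "closed (Bset F q k m)"
proof (unfold closed_sequential_limits, intro allI impI, elim conjE)
  fix x :: "nat \<Rightarrow> real" and u assume xB: "\<forall>n. x n \<in> Bset F q k m" and lim: "x \<longlonglongrightarrow> u"
  define c where "c = 1 - 1 / real (Suc k)"
  have c: "0 \<le> c" "c \<le> 1" by (auto simp: c_def field_simps)
  define \<rho>m where "\<rho>m = 1 / real (Suc m)"
  have x01: "x n \<in> {0..1}" for n using xB by (simp add: Bset_def)
  have u01: "u \<in> {0..1}"
    using closed_sequentially[OF closed_atLeastAtMost[of 0 1]] x01 lim by blast
  obtain \<beta> r where br: "0 \<le> \<beta>" "\<beta> < 1" "r > 0"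
    "\<And>t. t \<in> {0..1} \<Longrightarrow> \<bar>t - u\<bar> < r \<Longrightarrow> Eh (F (q u)) (F (q t)) (\<beta> * dist (q u) (q t))"
    using loc u01 by blast
  have "\<forall>s\<in>{0..1}. \<bar>s - u\<bar> < \<rho>m \<longrightarrow> Eh (F (q u)) (F (q s)) (c * dist (q u) (q s))"
  proof (intro ballI impI)
    fix s assume s01: "s \<in> {0..1}" and su: "\<bar>s - u\<bar> < \<rho>m"
    show "Eh (F (q u)) (F (q s)) (c * dist (q u) (q s))" unfolding Eh_def
    proof
      fix a assume a: "a \<in> F (q u)"
      show "infdist a (F (q s)) \<le> c * dist (q u) (q s)"
      proof (rule field_le_epsilon)
        fix \<delta> :: real assume \<delta>: "\<delta> > 0"
        define \<eta> where "\<eta> = min r (min (\<rho>m - \<bar>s - u\<bar>) (\<delta> / (2 * L)))"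
        have eta: "\<eta> > 0" using br su \<delta> Lpos by (auto simp: \<eta>_def)
        obtain n where n: "dist (x n) u < \<eta>" using lim eta unfolding LIMSEQ_def by auto
        have xu: "\<bar>x n - u\<bar> < \<eta>" using n by (simp add: dist_real_def)
        have "\<bar>s - x n\<bar> < \<rho>m" using xu su by (auto simp: \<eta>_def)
        then have E1: "Eh (F (q (x n))) (F (q s)) (c * dist (q (x n)) (q s))"
          using xB s01 by (auto simp: Bset_def c_def \<rho>m_def)
        have E2: "Eh (F (q u)) (F (q (x n))) (\<beta> * dist (q u) (q (x n)))"
          using br(4)[OF x01[of n]] xu by (auto simp: \<eta>_def)
        obtain a' where a': "a' \<in> F (q (x n))" "infdist a (F (q (x n))) = dist a a'"
          using infdist_compact_attained Fq[OF x01[of n]] by blast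
        have daa: "dist a a' \<le> \<beta> * dist (q u) (q (x n))" using E2 a a'(2) unfolding Eh_def by metis
        have dq: "dist (q u) (q (x n)) \<le> L * \<bar>x n - u\<bar>"
          using qlip u01 x01[of n] by (metis abs_minus_commute)
        have "\<beta> * dist (q u) (q (x n)) \<le> 1 * dist (q u) (q (x n))" using br by (intro mult_right_mono) auto
        then have daa': "dist a a' \<le> L * \<bar>x n - u\<bar>" using daa dq by linarith
        have "infdist a' (F (q s)) \<le> c * dist (q (x n)) (q s)" using E1 a'(1) unfolding Eh_def by blast
        also have "\<dots> \<le> c * (dist (q u) (q s) + dist (q (x n)) (q u))"
          using c dist_triangle[of "q (x n)" "q s" "q u"] by (intro mult_left_mono) linarith+
        also have "\<dots> \<le> c * dist (q u) (q s) + 1 * dist (q (x n)) (q u)"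
          using c mult_right_mono[OF c(2) zero_le_dist[of "q (x n)" "q u"]] by (simp add: distrib_left)
        finally have "infdist a' (F (q s)) \<le> c * dist (q u) (q s) + L * \<bar>x n - u\<bar>"
          using dq by (simp add: dist_commute)
        moreover have "infdist a (F (q s)) \<le> infdist a' (F (q s)) + dist a a'" by (rule infdist_triangle)
        moreover have "L * \<bar>x n - u\<bar> \<le> L * (\<delta> / (2 * L))"
          using xu Lpos by (intro mult_left_mono) (auto simp: \<eta>_def)
        moreover have "L * (\<delta> / (2 * L)) = \<delta> / 2" using Lpos by simp
        ultimately show "infdist a (F (q s)) \<le> c * dist (q u) (q s) + \<delta>" using daa' by linarith
      qed
    qed
  qed
  then show "u \<in> Bset F q k m" using u01 by (simp add: Bset_def c_def \<rho>m_def)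
qed

end


context setting begin

lemma B_cover: "u \<in> {0..1} \<Longrightarrow> \<exists>k m. u \<in> Bset F q k m"
proof -
  assume u01: "u \<in> {0..1}"
  obtain \<beta> r where br: "0 \<le> \<beta>" "\<beta> < 1" "r > 0"
    "\<And>t. t \<in> {0..1} \<Longrightarrow> \<bar>t - u\<bar> < r \<Longrightarrow> Eh (F (q u)) (F (q t)) (\<beta> * dist (q u) (q t))"
    using loc u01 by blast
  obtain k where k: "inverse (real (Suc k)) < 1 - \<beta>" using reals_Archimedean[of "1 - \<beta>"] br(2) by auto
  obtain m where m: "inverse (real (Suc m)) < r" using reals_Archimedean[of r] br(3) by auto
  have bk: "\<beta> \<le> 1 - 1 / real (Suc k)" using k by (simp add: inverse_eq_divide)
  have "\<forall>s\<in>{0..1}. \<bar>s - u\<bar> < 1 / real (Suc m) \<longrightarrow>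
      Eh (F (q u)) (F (q s)) ((1 - 1 / real (Suc k)) * dist (q u) (q s))"
  proof (intro ballI impI)
    fix s :: real assume s: "s \<in> {0..1}" "\<bar>s - u\<bar> < 1 / real (Suc m)"
    then have "\<bar>s - u\<bar> < r" using m by (simp add: inverse_eq_divide)
    then have "Eh (F (q u)) (F (q s)) (\<beta> * dist (q u) (q s))" using br(4) s(1) by blast
    then show "Eh (F (q u)) (F (q s)) ((1 - 1 / real (Suc k)) * dist (q u) (q s))"
      by (rule Eh_mono) (intro mult_right_mono bk zero_le_dist)
  qed
  then have "u \<in> Bset F q k m" using u01 by (simp add: Bset_def)
  then show ?thesis by blast
qed

lemma good_interval:
  "\<exists>k m \<alpha> \<tau>. 0 \<le> \<alpha> \<and> \<tau> > 0 \<and> \<alpha> + \<tau> \<le> 1 \<and> {\<alpha>..\<alpha>+\<tau>} \<subseteq> Bset F q k m"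
proof -
  define S :: "real set" where "S = {0..1}"
  have "\<exists>k m. \<not> S \<subseteq> closure (S - Bset F q k m)"
  proof (rule ccontr)
    assume "\<not> ?thesis"
    then have dense: "\<And>k m. S \<subseteq> closure (S - Bset F q k m)" by blast
    define G where "G = (\<lambda>(k, m). S - Bset F q k m) ` (UNIV :: (nat \<times> nat) set)"
    have "S \<subseteq> closure (\<Inter>G)"
    proof (rule Baire)
      show "closed S" by (simp add: S_def)
      show "countable G" unfolding G_def by simp
      fix T assume "T \<in> G"
      then obtain k m where T: "T = S - Bset F q k m" by (auto simp: G_def)
      have "T = S \<inter> - Bset F q k m" using T by auto
      moreover have "open (- Bset F q k m)" using B_closed by (simp add: open_Compl)
      ultimately have "openin (top_of_set S) T" by (simp add: openin_open_Int)
      then show "openin (top_of_set S) T \<and> S \<subseteq> closure T" using dense T by simp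
    qed
    moreover have "\<Inter>G = {}"
    proof (rule equals0I)
      fix x assume x: "x \<in> \<Inter>G"
      then have "x \<in> S" unfolding G_def by auto
      then have "\<exists>k m. x \<in> Bset F q k m" using B_cover by (simp add: S_def)
      then obtain k m where "x \<in> Bset F q k m" by blast
      moreover have "x \<in> S - Bset F q k m" using x unfolding G_def by auto
      ultimately show False by simp
    qed
    ultimately show False by (simp add: S_def)
  qed
  then obtain k m where "\<not> S \<subseteq> closure (S - Bset F q k m)" by blast
  then obtain u where u: "u \<in> S" "u \<notin> closure (S - Bset F q k m)" by blast
  then obtain e where e: "e > 0" "\<And>y. y \<in> S - Bset F q k m \<Longrightarrow> \<not> dist y u < e"
    unfolding closure_approachable by blast
  have inB: "y \<in> Bset F q k m" if "y \<in> S" "\<bar>y - u\<bar> < e" for y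
    using e(2)[of y] that by (auto simp: dist_real_def)
  define \<tau> where "\<tau> = min (e / 2) (1 / 2)"
  define \<alpha> where "\<alpha> = (if u \<le> 1 / 2 then u else u - \<tau>)"
  have tau: "\<tau> > 0" "\<tau> < e" "\<tau> \<le> 1/2" using e by (auto simp: \<tau>_def)
  have "0 \<le> \<alpha>" "\<alpha> + \<tau> \<le> 1" using u(1) tau by (auto simp: \<alpha>_def S_def)
  moreover have "{\<alpha>..\<alpha>+\<tau>} \<subseteq> Bset F q k m"
  proof
    fix y assume y: "y \<in> {\<alpha>..\<alpha>+\<tau>}"
    have "y \<in> S" using y u(1) tau by (auto simp: \<alpha>_def S_def split: if_splits)
    moreover have "\<bar>y - u\<bar> < e" using y tau by (auto simp: \<alpha>_def split: if_splits)
    ultimately show "y \<in> Bset F q k m" by (rule inB)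
  qed
  ultimately show ?thesis using tau by blast
qed

lemma main_local:
  "\<exists>G. 0 \<le> G \<and> G < L \<and> (\<forall>a\<in>F (q 0). \<exists>g. g 0 = a \<and> g 1 \<in> F (q 1) \<and> (\<forall>t\<in>{0..1}. g t \<in> X) \<and>
      (\<forall>s\<in>{0..1}. \<forall>t\<in>{0..1}. dist (g s) (g t) \<le> G * \<bar>s - t\<bar>))"
proof -
  obtain k m \<alpha> \<tau> where I: "0 \<le> \<alpha>" "\<tau> > 0" "\<alpha> + \<tau> \<le> 1" "{\<alpha>..\<alpha>+\<tau>} \<subseteq> Bset F q k m"
    using good_interval by blast
  define \<beta>0 where "\<beta>0 = 1 - 1 / real (Suc k)"
  have b0: "0 \<le> \<beta>0" "\<beta>0 < 1" by (auto simp: \<beta>0_def field_simps)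
  define r0 where "r0 = 1 / real (Suc m)"
  have r0: "r0 > 0" by (simp add: r0_def)
  have H: "\<forall>u\<in>{\<alpha>..\<alpha>+\<tau>}. \<forall>s\<in>{0..1}. \<bar>s - u\<bar> < r0 \<longrightarrow> Eh (F (q u)) (F (q s)) (\<beta>0 * dist (q u) (q s))"
    using I(4) by (auto simp: Bset_def \<beta>0_def r0_def)
  define G where "G = L * \<alpha> + \<beta>0 * L * \<tau> + L * (1 - (\<alpha> + \<tau>))"
  have GL: "G < L"
  proof -
    have "\<beta>0 * L * \<tau> < 1 * L * \<tau>" using b0 Lpos I(2) by (intro mult_strict_right_mono) auto
    then show ?thesis by (simp add: G_def algebra_simps)
  qed
  have G0: "0 \<le> G" using I b0 Lpos by (simp add: G_def)
  have q01: "0 \<in> {0..1::real}" "1 \<in> {0..1::real}" by auto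
  have "\<forall>a\<in>F (q 0). \<exists>g. g 0 = a \<and> g 1 \<in> F (q 1) \<and> (\<forall>t\<in>{0..1}. g t \<in> X) \<and>
      (\<forall>s\<in>{0..1}. \<forall>t\<in>{0..1}. dist (g s) (g t) \<le> G * \<bar>s - t\<bar>)"
  proof
    fix a assume a: "a \<in> F (q 0)"
    have ch: "\<forall>e>0. \<exists>n z. z 0 = a \<and> z n \<in> F (q 1) \<and> (\<forall>i\<le>n. z i \<in> X) \<and> (\<forall>i<n. dist (z i) (z (Suc i)) \<le> e)
              \<and> (\<Sum>i<n. dist (z i) (z (Suc i))) \<le> G + e"
    proof (intro allI impI)
      fix e :: real assume e: "e > 0"
      have c0: "Ch X F q a e 0 0" using Ch_start[of a F q 0 X] a Fq[OF q01(1)] by blast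
      have c1: "Ch X F q a e \<alpha> (0 + L * (\<alpha> - 0))" using RI[OF e _ I(1) _ c0] I by simp
      have c2: "Ch X F q a e (\<alpha> + \<tau>) (0 + L * (\<alpha> - 0) + \<beta>0 * L * \<tau>)"
        using UI[OF e I(1) I(2) I(3) b0(1) _ r0 H c1] b0 by simp
      have c3: "Ch X F q a e 1 (0 + L * (\<alpha> - 0) + \<beta>0 * L * \<tau> + L * (1 - (\<alpha> + \<tau>)))"
        using RI[OF e _ I(3) _ c2] I by simp
      then have "Ch X F q a e 1 (G + e)" by (rule Ch_mono) (use e in \<open>simp add: G_def\<close>)
      then show "\<exists>n z. z 0 = a \<and> z n \<in> F (q 1) \<and> (\<forall>i\<le>n. z i \<in> X) \<and> (\<forall>i<n. dist (z i) (z (Suc i)) \<le> e)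
              \<and> (\<Sum>i<n. dist (z i) (z (Suc i))) \<le> G + e" unfolding Ch_def by simp
    qed
    have "closed (F (q 1))" using Fq[OF q01(2)] by (simp add: compact_imp_closed)
    from chains_to_path[OF cX this G0 ch] show "\<exists>g. g 0 = a \<and> g 1 \<in> F (q 1) \<and> (\<forall>t\<in>{0..1}. g t \<in> X) \<and>
      (\<forall>s\<in>{0..1}. \<forall>t\<in>{0..1}. dist (g s) (g t) \<le> G * \<bar>s - t\<bar>)" .
  qed
  then show ?thesis using GL G0 by blast
qed

end


lemma loc_from_spc:
  fixes X :: "'a::metric_space set"
  assumes spc: "setvalued_pointwise_contraction X F" and KX: "maps_into_KX X F"
    and qX: "\<forall>t\<in>{0..1}. q t \<in> X"
    and qlip: "\<forall>s\<in>{0..1}. \<forall>t\<in>{0..1}. dist (q s) (q t) \<le> L * \<bar>s - t\<bar>"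
    and Lpos: "L > 0"
  shows "\<forall>u\<in>{0..1}. \<exists>\<beta> r. 0 \<le> \<beta> \<and> \<beta> < 1 \<and> r > 0 \<and> (\<forall>s\<in>{0..1}. \<bar>s - u\<bar> < r \<longrightarrow>
         Eh (F (q u)) (F (q s)) (\<beta> * dist (q u) (q s)) \<and> Eh (F (q s)) (F (q u)) (\<beta> * dist (q u) (q s)))"
proof
  fix u :: real assume u: "u \<in> {0..1}"
  have quX: "q u \<in> X" using qX u by blast
  obtain \<beta> N where bN: "0 \<le> \<beta>" "\<beta> < 1" "openin (top_of_set X) N" "q u \<in> N"
    "\<forall>y\<in>N. hdist dist (F (q u)) (F y) \<le> ereal (\<beta> * dist (q u) y)"
    using spc quX unfolding setvalued_pointwise_contraction_def by blast
  obtain e where e: "e > 0" "\<And>x'. x' \<in> X \<Longrightarrow> dist x' (q u) < e \<Longrightarrow> x' \<in> N"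
    using bN(3,4) unfolding openin_euclidean_subtopology_iff by blast
  have "\<forall>s\<in>{0..1}. \<bar>s - u\<bar> < e / L \<longrightarrow>
         Eh (F (q u)) (F (q s)) (\<beta> * dist (q u) (q s)) \<and> Eh (F (q s)) (F (q u)) (\<beta> * dist (q u) (q s))"
  proof (intro ballI impI)
    fix s :: real assume s: "s \<in> {0..1}" "\<bar>s - u\<bar> < e / L"
    have "dist (q s) (q u) \<le> L * \<bar>s - u\<bar>" using qlip s u by blast
    also have "\<dots> < L * (e / L)" using s Lpos by (intro mult_strict_left_mono) auto
    also have "\<dots> = e" using Lpos by simp
    finally have "q s \<in> N" using e qX s by blast
    then have h: "hdist dist (F (q u)) (F (q s)) \<le> ereal (\<beta> * dist (q u) (q s))" using bN(5) by blast
    have ne: "F (q u) \<noteq> {}" "F (q s) \<noteq> {}" using KX qX u s unfolding maps_into_KX_def by auto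
    show "Eh (F (q u)) (F (q s)) (\<beta> * dist (q u) (q s)) \<and> Eh (F (q s)) (F (q u)) (\<beta> * dist (q u) (q s))"
      using hdist_Eh[OF h ne] by blast
  qed
  then show "\<exists>\<beta> r. 0 \<le> \<beta> \<and> \<beta> < 1 \<and> r > 0 \<and> (\<forall>s\<in>{0..1}. \<bar>s - u\<bar> < r \<longrightarrow>
         Eh (F (q u)) (F (q s)) (\<beta> * dist (q u) (q s)) \<and> Eh (F (q s)) (F (q u)) (\<beta> * dist (q u) (q s)))"
    using bN(1,2) e(1) Lpos by (intro exI[of _ \<beta>] exI[of _ "e / L"]) simp
qed

lemma setting_intro:
  fixes X :: "'a::metric_space set"
  assumes "compact X" "setvalued_pointwise_contraction X F" "maps_into_KX X F"
    "\<forall>t\<in>{0..1}. q t \<in> X" "\<forall>s\<in>{0..1}. \<forall>t\<in>{0..1}. dist (q s) (q t) \<le> L * \<bar>s - t\<bar>" "L > 0"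
  shows "setting X F q L"
  using assms loc_from_spc[OF assms(2-6)] unfolding setting_def maps_into_KX_def by blast

theorem lemma19:
  fixes X :: "'a::metric_space set" and F :: "'a \<Rightarrow> 'a set"
  assumes "X \<noteq> {}" and "compact X" and "rect_path_connected X"
    and "maps_into_KX X F"
    and "setvalued_pointwise_contraction X F"
  shows "\<forall>x\<in>X. \<forall>y\<in>X. x \<noteq> y \<longrightarrow> hdist (d_r X) (F x) (F y) < ereal (d_r X x y)"
proof (intro ballI impI)
  fix x y assume x: "x \<in> X" and y: "y \<in> X" and xy: "x \<noteq> y"
  note rpc = assms(3)
  define D where "D = d_r X x y"
  have "dist x y > 0" using xy by simp
  then have Dpos: "D > 0" using dr_ge_dist[OF rpc x y] unfolding D_def by linarith
  have ch: "\<forall>e>0. \<exists>n z. z 0 = x \<and> z n \<in> {y} \<and> (\<forall>i\<le>n. z i \<in> X) \<and> (\<forall>i<n. dist (z i) (z (Suc i)) \<le> e)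
              \<and> (\<Sum>i<n. dist (z i) (z (Suc i))) \<le> D + e"
  proof (intro allI impI)
    fix e :: real assume e: "e > 0"
    obtain p where p: "rect_path X p x y" "real_of_ereal (path_len p) < D + e"
      using dr_approx[OF rpc x y e] unfolding D_def by blast
    obtain n z where "z 0 = x" "z n = y" "\<forall>i\<le>n. z i \<in> X" "\<forall>i<n. dist (z i) (z (Suc i)) \<le> e"
      "(\<Sum>i<n. dist (z i) (z (Suc i))) \<le> real_of_ereal (path_len p)"
      using chain_from_path[OF p(1) e] by blast
    then show "\<exists>n z. z 0 = x \<and> z n \<in> {y} \<and> (\<forall>i\<le>n. z i \<in> X) \<and> (\<forall>i<n. dist (z i) (z (Suc i)) \<le> e)
              \<and> (\<Sum>i<n. dist (z i) (z (Suc i))) \<le> D + e" using p(2) by (intro exI[of _ n] exI[of _ z]) auto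
  qed
  obtain q where q: "q 0 = x" "q 1 \<in> {y}" "\<forall>t\<in>{0..1}. q t \<in> X"
    "\<forall>s\<in>{0..1}. \<forall>t\<in>{0..1}. dist (q s) (q t) \<le> D * \<bar>s - t\<bar>"
    using chains_to_path[OF assms(2) _ _ ch] Dpos by auto
  define q2 where "q2 t = q (1 - t)" for t
  have q2: "q2 0 = y" "q2 1 = x" "\<forall>t\<in>{0..1}. q2 t \<in> X"
    "\<forall>s\<in>{0..1}. \<forall>t\<in>{0..1}. dist (q2 s) (q2 t) \<le> D * \<bar>s - t\<bar>"
  proof -
    show "q2 0 = y" "q2 1 = x" using q by (auto simp: q2_def)
    show "\<forall>t\<in>{0..1}. q2 t \<in> X" using q(3) by (auto simp: q2_def)
    show "\<forall>s\<in>{0..1}. \<forall>t\<in>{0..1}. dist (q2 s) (q2 t) \<le> D * \<bar>s - t\<bar>"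
    proof (intro ballI)
      fix s t :: real assume "s \<in> {0..1}" "t \<in> {0..1}"
      then have "1 - s \<in> {0..1}" "1 - t \<in> {0..1}" by auto
      then have "dist (q (1 - s)) (q (1 - t)) \<le> D * \<bar>(1 - s) - (1 - t)\<bar>" using q(4) by blast
      then show "dist (q2 s) (q2 t) \<le> D * \<bar>s - t\<bar>" by (simp add: q2_def abs_minus_commute)
    qed
  qed
  interpret S1: setting X F q D by (rule setting_intro[OF assms(2,5,4) q(3,4) Dpos])
  interpret S2: setting X F q2 D by (rule setting_intro[OF assms(2,5,4) q2(3,4) Dpos])
  obtain G1 where G1: "0 \<le> G1" "G1 < D" "\<forall>a\<in>F (q 0). \<exists>g. g 0 = a \<and> g 1 \<in> F (q 1) \<and> (\<forall>t\<in>{0..1}. g t \<in> X) \<and>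
      (\<forall>s\<in>{0..1}. \<forall>t\<in>{0..1}. dist (g s) (g t) \<le> G1 * \<bar>s - t\<bar>)" using S1.main_local by blast
  obtain G2 where G2: "0 \<le> G2" "G2 < D" "\<forall>a\<in>F (q2 0). \<exists>g. g 0 = a \<and> g 1 \<in> F (q2 1) \<and> (\<forall>t\<in>{0..1}. g t \<in> X) \<and>
      (\<forall>s\<in>{0..1}. \<forall>t\<in>{0..1}. dist (g s) (g t) \<le> G2 * \<bar>s - t\<bar>)" using S2.main_local by blast
  have FX: "F z \<subseteq> X" if "z \<in> X" for z using assms(4) that unfolding maps_into_KX_def by blast
  have bddF: "bdd_below ((\<lambda>b. d_r X a b) ` F z)" if "a \<in> X" "z \<in> X" for a z
    using dr_nonneg[OF rpc that(1)] FX[OF that(2)] by (intro bdd_belowI[of _ 0]) auto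
  have bddF2: "bdd_below ((\<lambda>a. d_r X a b) ` F z)" if "b \<in> X" "z \<in> X" for b z
    using dr_nonneg[OF rpc _ that(1)] FX[OF that(2)] by (intro bdd_belowI[of _ 0]) auto
  have P1: "(SUP a\<in>F x. ereal (INF b\<in>F y. d_r X a b)) \<le> ereal G1"
  proof (rule SUP_least)
    fix a assume a: "a \<in> F x"
    then obtain g where g: "g 0 = a" "g 1 \<in> F y" "\<forall>t\<in>{0..1}. g t \<in> X"
      "\<forall>s\<in>{0..1}. \<forall>t\<in>{0..1}. dist (g s) (g t) \<le> G1 * \<bar>s - t\<bar>" using G1(3) q(1,2) by auto
    have rp: "rect_path X g a (g 1)" "real_of_ereal (path_len g) \<le> G1"
      using rect_path_lip[OF g(4) G1(1) g(3) g(1) refl] by auto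
    have aX: "a \<in> X" using a FX x by blast
    have "(INF b\<in>F y. d_r X a b) \<le> d_r X a (g 1)" by (rule cINF_lower[OF bddF[OF aX y] g(2)])
    also have "\<dots> \<le> G1" using dr_le[OF rp(1)] rp(2) by linarith
    finally show "ereal (INF b\<in>F y. d_r X a b) \<le> ereal G1" by simp
  qed
  have P2: "(SUP b\<in>F y. ereal (INF a\<in>F x. d_r X a b)) \<le> ereal G2"
  proof (rule SUP_least)
    fix b assume b: "b \<in> F y"
    then obtain g where g: "g 0 = b" "g 1 \<in> F x" "\<forall>t\<in>{0..1}. g t \<in> X"
      "\<forall>s\<in>{0..1}. \<forall>t\<in>{0..1}. dist (g s) (g t) \<le> G2 * \<bar>s - t\<bar>" using G2(3) q2(1,2) by auto
    define g' where "g' t = g (1 - t)" for t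
    have g'X: "\<forall>t\<in>{0..1}. g' t \<in> X" using g(3) by (auto simp: g'_def)
    have g'lip: "\<forall>s\<in>{0..1}. \<forall>t\<in>{0..1}. dist (g' s) (g' t) \<le> G2 * \<bar>s - t\<bar>"
    proof (intro ballI)
      fix s t :: real assume "s \<in> {0..1}" "t \<in> {0..1}"
      then have "1 - s \<in> {0..1}" "1 - t \<in> {0..1}" by auto
      then have "dist (g (1 - s)) (g (1 - t)) \<le> G2 * \<bar>(1 - s) - (1 - t)\<bar>" using g(4) by blast
      then show "dist (g' s) (g' t) \<le> G2 * \<bar>s - t\<bar>" by (simp add: g'_def abs_minus_commute)
    qed
    have rp: "rect_path X g' (g 1) b" "real_of_ereal (path_len g') \<le> G2"
    proof -
      have "g' 0 = g 1" "g' 1 = b" using g(1) by (auto simp: g'_def)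
      then show "rect_path X g' (g 1) b" "real_of_ereal (path_len g') \<le> G2"
        using rect_path_lip[OF g'lip G2(1) g'X] by auto
    qed
    have bX: "b \<in> X" using b FX y by blast
    have "(INF a\<in>F x. d_r X a b) \<le> d_r X (g 1) b" by (rule cINF_lower[OF bddF2[OF bX x] g(2)])
    also have "\<dots> \<le> G2" using dr_le[OF rp(1)] rp(2) by linarith
    finally show "ereal (INF a\<in>F x. d_r X a b) \<le> ereal G2" by simp
  qed
  have "hdist (d_r X) (F x) (F y) \<le> ereal (max G1 G2)"
    unfolding hdist_def using P1 P2 by (auto simp: max_def intro: order_trans)
  also have "\<dots> < ereal D" using G1(2) G2(2) by simp
  finally show "hdist (d_r X) (F x) (F y) < ereal (d_r X x y)" by (simp add: D_def)
qed

end
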